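(* Let $A\in\mathbb{R}^{m\times N}$ and $K,S\subset[N]$. Suppose $\mathbb{1}_K$ is the unique solution of $$\min\|x\|_1\ \text{subject to}\ Ax=b,\ x\in[0,1]^N \qquad (P_{\mathrm{bin}})$$ with $b=A\mathbb{1}_K$, and $\mathbb{1}_S$ is the unique solution of $(P_{\mathrm{bin}})$ with $b=A\mathbb{1}_S$. Then $\ker(A)\cap H_K\cap H_{S^c}=\{0\}$.
   Context: $[N]=\{1,\dots,N\}$; $\mathbb{1}_K\in\{0,1\}^N$ denotes the indicator vector of $K$, and $S^c=[N]\setminus S$. For $K\subset[N]$, $H_K=\{w\in\mathbb{R}^N: w_i\le 0 \text{ for } i\in K,\ w_i\ge 0 \text{ for } i\notin K\}$. *)

theory Defs
  imports "HOL-Analysis.Analysis"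
begin

text \<open>Index set [N] is the finite type 'n; the matrix A has rows indexed by 'm.\<close>

definition ind_vec :: "'n::finite set \<Rightarrow> real ^ 'n" where
  "ind_vec K = (\<chi> i. if i \<in> K then 1 else 0)"

definition l1norm :: "real ^ 'n::finite \<Rightarrow> real" where
  "l1norm x = (\<Sum>i\<in>UNIV. \<bar>x $ i\<bar>)"

definition feasible_bin :: "real ^ 'n::finite ^ 'm::finite \<Rightarrow> real ^ 'm \<Rightarrow> real ^ 'n \<Rightarrow> bool" where
  "feasible_bin A b x \<longleftrightarrow> A *v x = b \<and> (\<forall>i. 0 \<le> x $ i \<and> x $ i \<le> 1)"

definition unique_sol_bin :: "real ^ 'n::finite ^ 'm::finite \<Rightarrow> real ^ 'm \<Rightarrow> real ^ 'n \<Rightarrow> bool" where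
  "unique_sol_bin A b x \<longleftrightarrow> feasible_bin A b x \<and>
     (\<forall>y. feasible_bin A b y \<and> y \<noteq> x \<longrightarrow> l1norm x < l1norm y)"

definition kernel_mat :: "real ^ 'n::finite ^ 'm::finite \<Rightarrow> (real ^ 'n) set" where
  "kernel_mat A = {w. A *v w = 0}"

definition H_set :: "'n::finite set \<Rightarrow> (real ^ 'n) set" where
  "H_set K = {w. (\<forall>i\<in>K. w $ i \<le> 0) \<and> (\<forall>i. i \<notin> K \<longrightarrow> w $ i \<ge> 0)}"

end

theory Submission
  imports Defs
begin

lemma key:
  fixes A :: "real ^ 'n::finite ^ 'm::finite" and c d :: "real ^ 'n"
  assumes u: "unique_sol_bin A (A *v c) c"
    and k: "A *v d = 0" and nz: "d \<noteq> 0"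
    and b: "\<And>i. 0 \<le> c $ i + d $ i \<and> c $ i + d $ i \<le> 1"
    and cpos: "\<And>i. 0 \<le> c $ i"
  shows "(\<Sum>i\<in>UNIV. d $ i) > 0"
proof -
  have f: "feasible_bin A (A *v c) (c + d)"
    unfolding feasible_bin_def using k b
    by (simp add: matrix_vector_right_distrib)
  have ne: "c + d \<noteq> c" using nz by simp
  have lt: "l1norm c < l1norm (c + d)" using u f ne unfolding unique_sol_bin_def by blast
  have e1: "l1norm c = (\<Sum>i\<in>UNIV. c $ i)" unfolding l1norm_def using cpos by simp
  have e2: "l1norm (c + d) = (\<Sum>i\<in>UNIV. c $ i + d $ i)" unfolding l1norm_def using b
    by (simp add: abs_of_nonneg)
  show ?thesis using lt e1 e2 by (simp add: sum.distrib)
qed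

theorem theorem2p2:
  fixes A :: "real ^ 'n::finite ^ 'm::finite" and K S :: "'n set"
  assumes "unique_sol_bin A (A *v ind_vec K) (ind_vec K)"
    and "unique_sol_bin A (A *v ind_vec S) (ind_vec S)"
  shows "kernel_mat A \<inter> H_set K \<inter> H_set (- S) = {0}"
proof (rule ccontr)
  assume "kernel_mat A \<inter> H_set K \<inter> H_set (- S) \<noteq> {0}"
  moreover have "0 \<in> kernel_mat A \<inter> H_set K \<inter> H_set (- S)"
    unfolding kernel_mat_def H_set_def by simp
  ultimately obtain w where w: "w \<in> kernel_mat A \<inter> H_set K \<inter> H_set (- S)" "w \<noteq> 0" by blast
  have kw: "A *v w = 0" using w unfolding kernel_mat_def by simp
  have hK: "\<And>i. i \<in> K \<Longrightarrow> w $ i \<le> 0" "\<And>i. i \<notin> K \<Longrightarrow> w $ i \<ge> 0"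
    using w unfolding H_set_def by auto
  have hS: "\<And>i. i \<notin> S \<Longrightarrow> w $ i \<le> 0" "\<And>i. i \<in> S \<Longrightarrow> w $ i \<ge> 0"
    using w unfolding H_set_def by auto
  define t where "t = 1 / (1 + l1norm w)"
  have l0: "l1norm w \<ge> 0" unfolding l1norm_def by (simp add: sum_nonneg)
  have tpos: "t > 0" unfolding t_def using l0 by simp
  have small: "t * \<bar>w $ i\<bar> < 1" for i
  proof -
    have "\<bar>w $ i\<bar> \<le> l1norm w" unfolding l1norm_def
      by (rule member_le_sum) auto
    then have "\<bar>w $ i\<bar> < 1 + l1norm w" by simp
    then show ?thesis unfolding t_def using l0 by (simp add: field_simps)
  qed
  have tw: "A *v (t *\<^sub>R w) = 0" "A *v (- (t *\<^sub>R w)) = 0"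
  proof -
    show "A *v (t *\<^sub>R w) = 0" using kw by (simp add: matrix_vector_mult_scaleR)
    have "- (t *\<^sub>R w) = (- t) *\<^sub>R w" by simp
    then show "A *v (- (t *\<^sub>R w)) = 0" using kw by (simp only: matrix_vector_mult_scaleR) simp
  qed
  have nz: "t *\<^sub>R w \<noteq> 0" "- (t *\<^sub>R w) \<noteq> 0" using w(2) tpos by auto
  have s1: "(\<Sum>i\<in>UNIV. (t *\<^sub>R w) $ i) > 0"
  proof (rule key[OF assms(1) tw(1) nz(1)])
    fix i
    have sm: "t * \<bar>w $ i\<bar> < 1" by (rule small)
    show "0 \<le> ind_vec K $ i + (t *\<^sub>R w) $ i \<and> ind_vec K $ i + (t *\<^sub>R w) $ i \<le> 1"
    proof (cases "i \<in> K")
      case True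
      then have "w $ i \<le> 0" by (rule hK)
      then show ?thesis using True sm tpos
        by (simp add: ind_vec_def abs_if mult_nonneg_nonpos split: if_splits)
    next
      case False
      then have "w $ i \<ge> 0" by (rule hK)
      then show ?thesis using False sm tpos by (simp add: ind_vec_def abs_if)
    qed
  next
    fix i show "0 \<le> ind_vec K $ i" by (simp add: ind_vec_def)
  qed
  have s2: "(\<Sum>i\<in>UNIV. (- (t *\<^sub>R w)) $ i) > 0"
  proof (rule key[OF assms(2) tw(2) nz(2)])
    fix i
    have sm: "t * \<bar>w $ i\<bar> < 1" by (rule small)
    show "0 \<le> ind_vec S $ i + (- (t *\<^sub>R w)) $ i \<and> ind_vec S $ i + (- (t *\<^sub>R w)) $ i \<le> 1"
    proof (cases "i \<in> S")
      case True
      then have "w $ i \<ge> 0" by (rule hS)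
      then show ?thesis using True sm tpos by (simp add: ind_vec_def abs_if)
    next
      case False
      then have "w $ i \<le> 0" by (rule hS)
      then show ?thesis using False sm tpos
        by (simp add: ind_vec_def abs_if mult_nonneg_nonpos split: if_splits)
    qed
  next
    fix i show "0 \<le> ind_vec S $ i" by (simp add: ind_vec_def)
  qed
  have "(\<Sum>i\<in>UNIV. (- (t *\<^sub>R w)) $ i) = - (\<Sum>i\<in>UNIV. (t *\<^sub>R w) $ i)"
    by (simp add: sum_negf)
  then show False using s1 s2 by simp
qed

end
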